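(* For each $n$, the set $\{\mathfrak{L}_a : a \text{ a weak composition of length } n\}$ is a basis of the polynomial ring $\mathbb{Z}[x_1,\ldots,x_n]$.
   Context: A weak composition of length $n$ is a sequence $a=(a_1,\ldots,a_n)$ of nonnegative integers; $x^a=x_1^{a_1}\cdots x_n^{a_n}$. A local move replaces consecutive entries $(0,k)$ at positions $p,p+1$ by $(i,j)$ with $i+j=k$, $i,j\ge0$. A fixed slide of $a$ is a weak composition obtained from $a$ by a (possibly empty) sequence of local moves in which $j>0$ is required whenever $a_{p+1}\ne 0$. The fundamental particle is $\mathfrak{L}_a=\sum x^b$ over the set of fixed slides $b$ of $a$. *)

theory Defs
  imports Main
begin

text \<open>A polynomial in Z[x_1,...,x_n] is represented by its coefficient function
(monomial exponent vector, a weak composition of length n) \<Rightarrow> int, with finite support.\<close>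

definition wcomps :: "nat \<Rightarrow> nat list set" where
  "wcomps n = {a. length a = n}"

definition int_poly_space :: "nat \<Rightarrow> (nat list \<Rightarrow> int) set" where
  "int_poly_space n = {f. finite {b. f b \<noteq> 0} \<and> (\<forall>b. f b \<noteq> 0 \<longrightarrow> length b = n)}"

definition fixed_move :: "nat list \<Rightarrow> nat list \<Rightarrow> nat list \<Rightarrow> bool" where
  "fixed_move a c d \<longleftrightarrow>
     (\<exists>p i j. Suc p < length c \<and> c ! p = 0 \<and> i + j = c ! Suc p \<and>
        (a ! Suc p \<noteq> 0 \<longrightarrow> 0 < j) \<and> d = c[p := i, Suc p := j])"

definition fixed_slides :: "nat list \<Rightarrow> nat list set" where
  "fixed_slides a = {b. (fixed_move a)\<^sup>*\<^sup>* a b}"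

text \<open>The fundamental particle L_a = sum of x^b over fixed slides b of a, as a coefficient function.\<close>

definition fundamental_particle :: "nat list \<Rightarrow> nat list \<Rightarrow> int" where
  "fundamental_particle a = (\<lambda>b. if b \<in> fixed_slides a then 1 else 0)"

end

theory Submission
  imports Defs
begin

definition ws :: "nat list \<Rightarrow> nat" where
  "ws b = (\<Sum>q<length b. q * b ! q)"

lemma move_props:
  assumes "fixed_move a c d"
  shows "length d = length c \<and> sum_list d = sum_list c \<and>
         (\<exists>i. ws c = ws d + i \<and> (i = 0 \<longrightarrow> d = c))"
proof -
  obtain p i j where h: "Suc p < length c" "c ! p = 0" "i + j = c ! Suc p"
     "d = c[p := i, Suc p := j]"
    using assms unfolding fixed_move_def by blast
  have len: "length d = length c" using h by simp
  have nth: "\<And>q. q < length c \<Longrightarrow> d ! q = (if q = Suc p then j else if q = p then i else c ! q)"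
    using h by (auto simp: nth_list_update)
  have e1: "\<And>q. q < length c \<Longrightarrow> c ! q + (if q = p then i else 0) = d ! q + (if q = Suc p then i else 0)"
    using h nth by auto
  have "(\<Sum>q<length c. c ! q + (if q = p then i else 0)) = (\<Sum>q<length c. d ! q + (if q = Suc p then i else 0))"
    using e1 by (intro sum.cong) auto
  hence "(\<Sum>q<length c. c ! q) + i = (\<Sum>q<length c. d ! q) + i"
    using h(1) by (simp add: sum.distrib)
  hence s: "sum_list d = sum_list c"
    using len by (simp add: sum_list_sum_nth atLeast0LessThan)
  have e2: "\<And>q. q < length c \<Longrightarrow> q * c ! q + (if q = p then p * i else 0) = q * d ! q + (if q = Suc p then Suc p * i else 0)"
    using h(1,2,4) h(3)[symmetric] nth by (auto simp: algebra_simps)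
  have "(\<Sum>q<length c. q * c ! q + (if q = p then p * i else 0)) = (\<Sum>q<length c. q * d ! q + (if q = Suc p then Suc p * i else 0))"
    using e2 by (intro sum.cong) auto
  hence "ws c + p * i = ws d + Suc p * i"
    using h(1) len by (simp add: sum.distrib ws_def)
  hence w: "ws c = ws d + i" by simp
  have "i = 0 \<longrightarrow> d = c"
  proof
    assume "i = 0"
    hence "d = c[p := c ! p, Suc p := c ! Suc p]" using h by simp
    thus "d = c" by simp
  qed
  thus ?thesis using len s w by blast
qed

lemma slide_props:
  assumes "(fixed_move a)\<^sup>*\<^sup>* a b"
  shows "length b = length a \<and> sum_list b = sum_list a \<and> ws b \<le> ws a \<and> (ws b = ws a \<longrightarrow> b = a)"
  using assms
proof (induction rule: rtranclp_induct)
  case base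
  then show ?case by simp
next
  case (step c d)
  from move_props[OF step(2)] obtain i where "length d = length c" "sum_list d = sum_list c"
    "ws c = ws d + i" "i = 0 \<longrightarrow> d = c" by blast
  note h = this
  have "length d = length a" "sum_list d = sum_list a" using h step(3) by simp_all
  moreover have "ws d \<le> ws a" using h step(3) by linarith
  moreover have "ws d = ws a \<longrightarrow> d = a"
  proof
    assume e: "ws d = ws a"
    hence "ws c = ws a" "i = 0" using h step(3) by linarith+
    hence dc: "d = c" "c = a" using h step(3) by blast+
    thus "d = a" by (rule trans)
  qed
  ultimately show ?case by blast
qed

lemma slides_finite: "finite (fixed_slides a)"
proof -
  have "fixed_slides a \<subseteq> {b. set b \<subseteq> {0..sum_list a} \<and> length b = length a}"
  proof
    fix b assume "b \<in> fixed_slides a"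
    hence "length b = length a \<and> sum_list b = sum_list a"
      using slide_props unfolding fixed_slides_def by blast
    thus "b \<in> {b. set b \<subseteq> {0..sum_list a} \<and> length b = length a}"
      by (auto dest: member_le_sum_list)
  qed
  moreover have "finite {b. set b \<subseteq> {0..sum_list a} \<and> length b = length a}"
    by (rule finite_lists_length_eq) simp
  ultimately show ?thesis by (rule finite_subset)
qed

lemma fp_nz: "fundamental_particle a b \<noteq> 0 \<Longrightarrow> length b = length a \<and> ws b \<le> ws a \<and> (ws b = ws a \<longrightarrow> b = a)"
  unfolding fundamental_particle_def fixed_slides_def
  using slide_props[of a b] by (auto split: if_splits)

lemma fp_self: "fundamental_particle a a = 1"
  unfolding fundamental_particle_def fixed_slides_def by simp

lemma fp_space: "a \<in> wcomps n \<Longrightarrow> fundamental_particle a \<in> int_poly_space n"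
  unfolding int_poly_space_def wcomps_def
proof (intro CollectI conjI allI impI)
  show "finite {b. fundamental_particle a b \<noteq> 0}"
    using slides_finite[of a] by (rule finite_subset[rotated]) (auto simp: fundamental_particle_def split: if_splits)
next
  fix b assume "a \<in> {a. length a = n}" "fundamental_particle a b \<noteq> 0"
  thus "length b = n" using fp_nz by auto
qed

definition inspan :: "nat \<Rightarrow> (nat list \<Rightarrow> int) \<Rightarrow> bool" where
  "inspan n f \<longleftrightarrow> (\<exists>S c. finite S \<and> S \<subseteq> wcomps n \<and> f = (\<lambda>b. \<Sum>a\<in>S. c a * fundamental_particle a b))"

lemma inspan_add:
  assumes "inspan n f" "inspan n g" shows "inspan n (\<lambda>b. f b + g b)"
proof -
  obtain S1 c1 where 1: "finite S1" "S1 \<subseteq> wcomps n" "f = (\<lambda>b. \<Sum>a\<in>S1. c1 a * fundamental_particle a b)"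
    using assms(1) unfolding inspan_def by (elim exE conjE) (rule that, assumption+)
  obtain S2 c2 where 2: "finite S2" "S2 \<subseteq> wcomps n" "g = (\<lambda>b. \<Sum>a\<in>S2. c2 a * fundamental_particle a b)"
    using assms(2) unfolding inspan_def by (elim exE conjE) (rule that, assumption+)
  let ?c = "\<lambda>a. (if a \<in> S1 then c1 a else 0) + (if a \<in> S2 then c2 a else 0)"
  have "\<And>b. (\<Sum>a\<in>S1 \<union> S2. ?c a * fundamental_particle a b) = f b + g b"
  proof -
    fix b
    have "(\<Sum>a\<in>S1 \<union> S2. ?c a * fundamental_particle a b) =
      (\<Sum>a\<in>S1 \<union> S2. (if a \<in> S1 then c1 a * fundamental_particle a b else 0)) +
      (\<Sum>a\<in>S1 \<union> S2. (if a \<in> S2 then c2 a * fundamental_particle a b else 0))"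
      unfolding sum.distrib[symmetric] by (intro sum.cong refl) (simp add: distrib_right)
    also have "\<dots> = (\<Sum>a\<in>(S1 \<union> S2) \<inter> S1. c1 a * fundamental_particle a b) +
       (\<Sum>a\<in>(S1 \<union> S2) \<inter> S2. c2 a * fundamental_particle a b)"
      by (simp only: sum.inter_restrict[OF finite_UnI[OF 1(1) 2(1)]])
    also have "\<dots> = f b + g b" using 1(3) 2(3)
      by (simp add: Int_absorb1)
    finally show "(\<Sum>a\<in>S1 \<union> S2. ?c a * fundamental_particle a b) = f b + g b" .
  qed
  thus ?thesis unfolding inspan_def using 1 2
    by (intro exI[of _ "S1 \<union> S2"] exI[of _ ?c]) auto
qed

lemma span_step:
  "\<forall>f. f \<in> int_poly_space n \<longrightarrow> (\<forall>b. f b \<noteq> 0 \<longrightarrow> ws b < m) \<longrightarrow> inspan n f"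
proof (induction m)
  case 0
  show ?case
  proof (intro allI impI)
    fix f :: "nat list \<Rightarrow> int"
    assume "\<forall>b. f b \<noteq> 0 \<longrightarrow> ws b < 0"
    hence "f = (\<lambda>b. \<Sum>a\<in>{}. 0 * fundamental_particle a b)" by auto
    thus "inspan n f" unfolding inspan_def
      by (intro exI[of _ "{}"] exI[of _ "\<lambda>_. 0"]) (simp add: wcomps_def)
  qed
next
  case (Suc m)
  show ?case
  proof (intro allI impI)
    fix f :: "nat list \<Rightarrow> int"
    assume fs: "f \<in> int_poly_space n" and fb: "\<forall>b. f b \<noteq> 0 \<longrightarrow> ws b < Suc m"
    define T where "T = {a. f a \<noteq> 0 \<and> ws a = m}"
    have Tfin: "finite T" using fs unfolding int_poly_space_def T_def
      by (auto intro: finite_subset[rotated])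
    have Tw: "T \<subseteq> wcomps n" using fs unfolding int_poly_space_def T_def wcomps_def by auto
    define h where "h = (\<lambda>b. \<Sum>a\<in>T. f a * fundamental_particle a b)"
    define g where "g = (\<lambda>b. f b - h b)"
    have hsp: "inspan n h" unfolding inspan_def h_def using Tfin Tw
      by (intro exI[of _ T] exI[of _ f]) simp
    have hhigh: "h b = f b" if "ws b \<ge> m" for b
    proof -
      have "\<And>a. a \<in> T \<Longrightarrow> a \<noteq> b \<Longrightarrow> f a * fundamental_particle a b = 0"
      proof -
        fix a assume "a \<in> T" "a \<noteq> b"
        show "f a * fundamental_particle a b = 0"
        proof (rule ccontr)
          assume "f a * fundamental_particle a b \<noteq> 0"
          hence "fundamental_particle a b \<noteq> 0" by auto
          from fp_nz[OF this] `a \<in> T` `a \<noteq> b` that show False unfolding T_def by auto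
        qed
      qed
      hence "h b = (\<Sum>a\<in>T. if a = b then f a * fundamental_particle a b else 0)"
        unfolding h_def by (intro sum.cong) auto
      also have "\<dots> = (if b \<in> T then f b else 0)"
        using Tfin by (simp add: fp_self)
      also have "\<dots> = f b" using fb that unfolding T_def by (auto simp: less_Suc_eq)
      finally show ?thesis .
    qed
    have hsupp: "{b. h b \<noteq> 0} \<subseteq> (\<Union>a\<in>T. fixed_slides a)"
      unfolding h_def fundamental_particle_def
      by (auto elim!: sum.not_neutral_contains_not_neutral split: if_splits)
    have gsp: "g \<in> int_poly_space n"
      unfolding int_poly_space_def
    proof (intro CollectI conjI allI impI)
      have "{b. g b \<noteq> 0} \<subseteq> {b. f b \<noteq> 0} \<union> (\<Union>a\<in>T. fixed_slides a)"
        using hsupp unfolding g_def by auto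
      moreover have "finite ({b. f b \<noteq> 0} \<union> (\<Union>a\<in>T. fixed_slides a))"
        using fs Tfin slides_finite unfolding int_poly_space_def by auto
      ultimately show "finite {b. g b \<noteq> 0}" by (rule finite_subset)
    next
      fix b assume "g b \<noteq> 0"
      hence "f b \<noteq> 0 \<or> h b \<noteq> 0" unfolding g_def by auto
      thus "length b = n"
      proof
        assume "f b \<noteq> 0" thus ?thesis using fs unfolding int_poly_space_def by auto
      next
        assume "h b \<noteq> 0"
        then obtain a where "a \<in> T" "b \<in> fixed_slides a" using hsupp by blast
        thus ?thesis using Tw slide_props unfolding fixed_slides_def wcomps_def by auto
      qed
    qed
    have "\<forall>b. g b \<noteq> 0 \<longrightarrow> ws b < m"
    proof (intro allI impI)
      fix b assume "g b \<noteq> 0"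
      show "ws b < m"
      proof (rule ccontr)
        assume "\<not> ws b < m"
        hence "h b = f b" using hhigh by simp
        thus False using `g b \<noteq> 0` unfolding g_def by simp
      qed
    qed
    hence "inspan n g" using Suc gsp by blast
    from inspan_add[OF this hsp] have "inspan n (\<lambda>b. g b + h b)" .
    moreover have "(\<lambda>b. g b + h b) = f" unfolding g_def by auto
    ultimately show "inspan n f" by simp
  qed
qed

theorem proposition4p6:
  fixes n :: nat
  shows "(\<forall>a \<in> wcomps n. fundamental_particle a \<in> int_poly_space n) \<and>
    (\<forall>(S :: nat list set) (c :: nat list \<Rightarrow> int).
        finite S \<and> S \<subseteq> wcomps n \<and>
        (\<forall>b. (\<Sum>a\<in>S. c a * fundamental_particle a b) = 0) \<longrightarrow> (\<forall>a\<in>S. c a = 0)) \<and>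
    (\<forall>f \<in> int_poly_space n. \<exists>(S :: nat list set) (c :: nat list \<Rightarrow> int).
        finite S \<and> S \<subseteq> wcomps n \<and> f = (\<lambda>b. \<Sum>a\<in>S. c a * fundamental_particle a b))"
proof (intro conjI allI impI ballI)
  fix a assume "a \<in> wcomps n" thus "fundamental_particle a \<in> int_poly_space n" by (rule fp_space)
next
  fix S :: "nat list set" and c :: "nat list \<Rightarrow> int" and a0
  assume A: "finite S \<and> S \<subseteq> wcomps n \<and> (\<forall>b. (\<Sum>a\<in>S. c a * fundamental_particle a b) = 0)"
    and a0: "a0 \<in> S"
  show "c a0 = 0"
  proof (rule ccontr)
    assume nz: "c a0 \<noteq> 0"
    define T where "T = {a \<in> S. c a \<noteq> 0}"
    have Tfin: "finite T" using A unfolding T_def by auto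
    have Tne: "T \<noteq> {}" using a0 nz unfolding T_def by auto
    have "Max (ws ` T) \<in> ws ` T" using Tfin Tne by simp
    then obtain a where aT: "a \<in> T" and am: "ws a = Max (ws ` T)" by auto
    have amax: "\<And>a'. a' \<in> T \<Longrightarrow> ws a' \<le> ws a" using am Tfin by simp
    have "(\<Sum>a'\<in>S. c a' * fundamental_particle a' a) = (\<Sum>a'\<in>S. if a' = a then c a else 0)"
    proof (intro sum.cong refl)
      fix a' assume "a' \<in> S"
      show "c a' * fundamental_particle a' a = (if a' = a then c a else 0)"
      proof (cases "a' = a")
        case True thus ?thesis by (simp add: fp_self)
      next
        case False
        show ?thesis
        proof (rule ccontr)
          assume "c a' * fundamental_particle a' a \<noteq> (if a' = a then c a else 0)"
          hence "c a' \<noteq> 0" "fundamental_particle a' a \<noteq> 0" using False by auto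
          hence "a' \<in> T" "ws a \<le> ws a'" "ws a = ws a' \<longrightarrow> a = a'" using `a' \<in> S` fp_nz T_def by auto
          thus False using amax[of a'] False by auto
        qed
      qed
    qed
    also have "\<dots> = c a" using A aT unfolding T_def by simp
    finally show False using A aT unfolding T_def by auto
  qed
next
  fix f assume fs: "f \<in> int_poly_space n"
  define m where "m = Suc (Max (ws ` {b. f b \<noteq> 0}))"
  have fin: "finite {b. f b \<noteq> 0}" using fs unfolding int_poly_space_def by auto
  have "\<forall>b. f b \<noteq> 0 \<longrightarrow> ws b < m"
    unfolding m_def using fin by (auto simp: less_Suc_eq_le)
  hence "inspan n f" using span_step fs by blast
  thus "\<exists>S c. finite S \<and> S \<subseteq> wcomps n \<and> f = (\<lambda>b. \<Sum>a\<in>S. c a * fundamental_particle a b)"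
    unfolding inspan_def .
qed

end
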